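(* Let $G$ be a locally compact abelian group, $X$ a locally convex topological vector space over $\mathbf{C}$, $n\in\mathbf{Z}_+$, and $H$ a closed subgroup of $G$ such that $G/H$ is a torsion group. Then: (a) the restriction map $r:P^n(G,X)\to P^n(H,X)$, $p\mapsto p|_H$, is one-to-one, so $\dim P^n(G,X)\le\dim P^n(H,X)$; (b) if moreover $G/H$ is of bounded order and $P^n(H)$ is finite dimensional, then $r:P^n(G,X)\to P^n(H,X)$ is a linear isomorphism.
   Context: $\mathbf{Z}_+=\{0,1,2,\dots\}$. A group is torsion if every element has finite order, and of bounded order if the orders of its elements are bounded. For an abelian topological group $S$, a continuous $p:S\to X$ is a polynomial of degree at most $n$ if for all $s,t\in S$ the map $m\mapsto p(s+mt)$, $m\in\mathbf{Z}_+$, is a polynomial in $m$ of degree at most $n$ with coefficients in $X$; $P^n(S,X)$ is the space of these and $P^n(S)=P^n(S,\mathbf{C})$. *)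

theory Defs
  imports "HOL-Analysis.Analysis"
begin

class complex_vector = real_vector +
  fixes scaleC :: "complex \<Rightarrow> 'a \<Rightarrow> 'a" (infixr "*\<^sub>C" 75)
  assumes scaleC_add_right: "a *\<^sub>C (x + y) = a *\<^sub>C x + a *\<^sub>C y"
    and scaleC_add_left: "(a + b) *\<^sub>C x = a *\<^sub>C x + b *\<^sub>C x"
    and scaleC_scaleC: "a *\<^sub>C (b *\<^sub>C x) = (a * b) *\<^sub>C x"
    and scaleC_one: "1 *\<^sub>C x = x"
    and scaleR_scaleC: "r *\<^sub>R x = complex_of_real r *\<^sub>C x"

instantiation complex :: complex_vector
begin
definition scaleC_complex :: "complex \<Rightarrow> complex \<Rightarrow> complex" where
  "scaleC_complex a x = a * x"
instance by standard (auto simp: scaleC_complex_def algebra_simps scaleR_conv_of_real)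
end

definition nmul :: "nat \<Rightarrow> 'g::ab_group_add \<Rightarrow> 'g" where
  "nmul m t = (\<Sum>i<m. t)"

text \<open>Topological abelian group, locally compact (and Hausdorff via the t2_space class).\<close>
definition topological_ab_group :: "'g::{topological_space, ab_group_add} itself \<Rightarrow> bool" where
  "topological_ab_group _ \<longleftrightarrow>
     continuous_on UNIV (\<lambda>(x::'g, y::'g). x + y) \<and> continuous_on UNIV (\<lambda>x::'g. - x)"

definition locally_compact_space_type :: "'g::topological_space itself \<Rightarrow> bool" where
  "locally_compact_space_type _ \<longleftrightarrow>
     (\<forall>x::'g. \<exists>U K. open U \<and> compact K \<and> x \<in> U \<and> U \<subseteq> K)"

definition locally_convex_tvs :: "'x::{topological_space, complex_vector} itself \<Rightarrow> bool" where
  "locally_convex_tvs _ \<longleftrightarrow>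
     continuous_on UNIV (\<lambda>(x::'x, y::'x). x + y) \<and>
     continuous_on UNIV (\<lambda>(c::complex, x::'x). c *\<^sub>C x) \<and>
     (\<forall>U. open U \<and> (0::'x) \<in> U \<longrightarrow> (\<exists>V. open V \<and> convex V \<and> 0 \<in> V \<and> V \<subseteq> U))"

definition closed_subgroup :: "'g::{topological_space, ab_group_add} set \<Rightarrow> bool" where
  "closed_subgroup H \<longleftrightarrow> closed H \<and> 0 \<in> H \<and> (\<forall>x\<in>H. \<forall>y\<in>H. x + y \<in> H) \<and> (\<forall>x\<in>H. - x \<in> H)"

definition quotient_torsion :: "'g::ab_group_add set \<Rightarrow> bool" where
  "quotient_torsion H \<longleftrightarrow> (\<forall>g. \<exists>k>0. nmul k g \<in> H)"

definition quotient_bounded_order :: "'g::ab_group_add set \<Rightarrow> bool" where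
  "quotient_bounded_order H \<longleftrightarrow> (\<exists>B. \<forall>g. \<exists>k>0. k \<le> B \<and> nmul k g \<in> H)"

text \<open>P^n(S,X) for a subgroup S (with the subspace topology); functions are
  represented extensionally, i.e. as functions on the ambient type vanishing off S.\<close>
definition Pn :: "nat \<Rightarrow> 'g::{topological_space, ab_group_add} set
                   \<Rightarrow> ('g \<Rightarrow> 'x::{topological_space, complex_vector}) set" where
  "Pn n S = {p. continuous_on S p \<and> (\<forall>x. x \<notin> S \<longrightarrow> p x = 0) \<and>
     (\<forall>s\<in>S. \<forall>t\<in>S. \<exists>c::nat \<Rightarrow> 'x. \<forall>m::nat.
        p (s + nmul m t) = (\<Sum>k\<le>n. (of_nat m) ^ k *\<^sub>C c k))}"

definition restr :: "'g set \<Rightarrow> ('g \<Rightarrow> 'x::zero) \<Rightarrow> ('g \<Rightarrow> 'x)" where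
  "restr H p = (\<lambda>x. if x \<in> H then p x else 0)"

definition fin_dim_C :: "('g \<Rightarrow> complex) set \<Rightarrow> bool" where
  "fin_dim_C V \<longleftrightarrow> (\<exists>k (f :: nat \<Rightarrow> 'g \<Rightarrow> complex). (\<forall>i<k. f i \<in> V) \<and>
     (\<forall>p\<in>V. \<exists>a :: nat \<Rightarrow> complex. p = (\<lambda>x. \<Sum>i<k. a i * f i x)))"

end

theory Submission
  imports Defs "HOL-Computational_Algebra.Polynomial"
begin

lemma scaleC_zero_right: "a *\<^sub>C (0::'x::complex_vector) = 0"
proof -
  have "a *\<^sub>C (0::'x) = a *\<^sub>C 0 + a *\<^sub>C 0" by (metis add.right_neutral scaleC_add_right)
  then show ?thesis by simp
qed

lemma scaleC_zero_left: "(0::complex) *\<^sub>C (x::'x::complex_vector) = 0"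
proof -
  have "(0::complex) *\<^sub>C x = 0 *\<^sub>C x + 0 *\<^sub>C x" by (metis add.right_neutral scaleC_add_left)
  then show ?thesis by simp
qed

lemma scaleC_sum_right: "a *\<^sub>C sum f A = (\<Sum>i\<in>A. a *\<^sub>C (f i :: 'x::complex_vector))"
  by (induction A rule: infinite_finite_induct) (simp_all add: scaleC_zero_right scaleC_add_right)

lemma scaleC_sum_left: "sum f A *\<^sub>C (x::'x::complex_vector) = (\<Sum>i\<in>A. f i *\<^sub>C x)"
  by (induction A rule: infinite_finite_induct) (simp_all add: scaleC_zero_left scaleC_add_left)

definition lw :: "nat \<Rightarrow> (nat \<Rightarrow> complex) \<Rightarrow> complex \<Rightarrow> nat \<Rightarrow> complex" where
  "lw n a x j = (\<Prod>i\<in>{..n}-{j}. (x - a i) / (a j - a i))"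

lemma lw_delta:
  assumes "inj_on a {..n}" "j \<le> n" "l \<le> n"
  shows "lw n a (a l) j = (if j = l then 1 else 0)"
proof (cases "j = l")
  case True
  have "\<forall>i\<in>{..n}-{j}. (a l - a i) / (a j - a i) = 1"
    using assms True by (auto simp: inj_on_def)
  then show ?thesis using True by (simp add: lw_def)
next
  case False
  then show ?thesis using assms by (auto simp: lw_def intro!: bexI[of _ l])
qed

lemma lagrange_scalar:
  fixes a :: "nat \<Rightarrow> complex"
  assumes inj: "inj_on a {..n}" and kn: "k \<le> n"
  shows "x ^ k = (\<Sum>j\<le>n. lw n a x j * a j ^ k)"
proof -
  define P where "P j = (\<Prod>i\<in>{..n}-{j}. smult (1 / (a j - a i)) [:- a i, 1:])" for j
  have polyP: "poly (P j) y = lw n a y j" for j y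
    unfolding P_def lw_def poly_prod by (intro prod.cong) (auto simp: diff_divide_distrib)
  have degP: "degree (P j) \<le> n" if "j \<le> n" for j
  proof -
    have "degree (P j) \<le> sum (degree \<circ> (\<lambda>i. smult (1 / (a j - a i)) [:- a i, 1:])) ({..n}-{j})"
      unfolding P_def by (rule degree_prod_sum_le) simp
    also have "\<dots> \<le> card ({..n}-{j}) * 1"
      using sum_bounded_above[of "{..n}-{j}" "degree \<circ> (\<lambda>i. smult (1 / (a j - a i)) [:- a i, 1:])" 1]
      by (auto intro: order.trans[OF degree_smult_le])
    also have "\<dots> = n" using that by simp
    finally show ?thesis .
  qed
  define Q where "Q = (\<Sum>j\<le>n. smult (a j ^ k) (P j))"
  have degQ: "degree Q \<le> n" unfolding Q_def
    by (intro degree_sum_le) (auto intro: order.trans[OF degree_smult_le] degP)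
  have polyQ: "poly Q y = (\<Sum>j\<le>n. lw n a y j * a j ^ k)" for y
    unfolding Q_def poly_sum by (simp add: polyP mult.commute)
  have "Q = monom 1 k"
  proof (rule poly_eqI_degree[of "a ` {..n}"])
    fix y assume "y \<in> a ` {..n}"
    then obtain l where l: "l \<le> n" "y = a l" by auto
    have "poly Q y = (\<Sum>j\<le>n. (if j = l then 1 else 0) * a j ^ k)"
      unfolding polyQ l(2) using lw_delta[OF inj _ l(1)] by (intro sum.cong) auto
    also have "\<dots> = (\<Sum>j\<le>n. if j = l then a j ^ k else 0)" by (intro sum.cong) auto
    also have "\<dots> = y ^ k" using l by simp
    finally show "poly Q y = poly (monom 1 k) y" by (simp add: poly_monom)
  next
    show "degree Q < card (a ` {..n})" using degQ card_image[OF inj] by simp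
    show "degree (monom (1::complex) k) < card (a ` {..n})"
      using card_image[OF inj] kn degree_monom_le[of "1::complex" k] by simp
  qed
  then have "poly Q x = x ^ k" by (simp add: poly_monom)
  then show ?thesis using polyQ by simp
qed

lemma interp:
  fixes a :: "nat \<Rightarrow> complex" and c :: "nat \<Rightarrow> 'x::complex_vector"
  assumes inj: "inj_on a {..n}"
  shows "(\<Sum>k\<le>n. x ^ k *\<^sub>C c k) = (\<Sum>j\<le>n. lw n a x j *\<^sub>C (\<Sum>k\<le>n. a j ^ k *\<^sub>C c k))"
proof -
  have "(\<Sum>j\<le>n. lw n a x j *\<^sub>C (\<Sum>k\<le>n. a j ^ k *\<^sub>C c k))
      = (\<Sum>j\<le>n. \<Sum>k\<le>n. (lw n a x j * a j ^ k) *\<^sub>C c k)"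
    by (simp add: scaleC_sum_right scaleC_scaleC)
  also have "\<dots> = (\<Sum>k\<le>n. \<Sum>j\<le>n. (lw n a x j * a j ^ k) *\<^sub>C c k)"
    by (rule sum.swap)
  also have "\<dots> = (\<Sum>k\<le>n. (\<Sum>j\<le>n. lw n a x j * a j ^ k) *\<^sub>C c k)"
    by (simp add: scaleC_sum_left)
  also have "\<dots> = (\<Sum>k\<le>n. x ^ k *\<^sub>C c k)"
    using lagrange_scalar[OF inj] by simp
  finally show ?thesis by simp
qed


lemma nmul_0[simp]: "nmul 0 t = 0" by (simp add: nmul_def)
lemma nmul_Suc: "nmul (Suc m) t = nmul m t + t" by (simp add: nmul_def)
lemma nmul_1[simp]: "nmul (Suc 0) t = t" by (simp add: nmul_def)
lemma nmul_add_left: "nmul (a + b) t = nmul a t + nmul b t"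
  by (induction b) (simp_all add: nmul_Suc add.assoc)
lemma nmul_add_right: "nmul m (s + t) = nmul m s + nmul m t"
  by (induction m) (simp_all add: nmul_Suc algebra_simps)
lemma nmul_mult: "nmul (a * b) t = nmul a (nmul b t)"
  by (induction a) (simp_all add: nmul_Suc nmul_add_left add.commute)
lemma nmul_zero[simp]: "nmul m 0 = 0"
  by (induction m) (simp_all add: nmul_Suc)

lemma nmul_closed: "closed_subgroup H \<Longrightarrow> h \<in> H \<Longrightarrow> nmul m h \<in> H"
  by (induction m) (auto simp: nmul_Suc closed_subgroup_def)

lemma nmul_cont:
  assumes "topological_ab_group TYPE('g::{topological_space, ab_group_add})"
  shows "continuous_on UNIV (nmul m :: 'g \<Rightarrow> 'g)"
proof (induction m)
  case 0 then show ?case by (simp add: nmul_def)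
next
  case (Suc m)
  have add: "continuous_on UNIV (\<lambda>(x::'g, y::'g). x + y)"
    using assms by (simp add: topological_ab_group_def)
  have "continuous_on UNIV (\<lambda>t. (\<lambda>(x::'g, y::'g). x + y) (nmul m t, t))"
    by (rule continuous_on_compose2[OF add]) (auto intro: continuous_on_Pair Suc continuous_on_id)
  then show ?case by (simp add: nmul_Suc[abs_def])
qed

lemma cont_addX:
  assumes "locally_convex_tvs TYPE('x::{topological_space, complex_vector})"
    and "continuous_on S f" "continuous_on S g"
  shows "continuous_on S (\<lambda>y. f y + g y :: 'x)"
proof -
  have add: "continuous_on UNIV (\<lambda>(x::'x, y::'x). x + y)"
    using assms by (simp add: locally_convex_tvs_def)
  have "continuous_on S (\<lambda>y. (\<lambda>(x::'x, y::'x). x + y) (f y, g y))"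
    by (rule continuous_on_compose2[OF add]) (auto intro: continuous_on_Pair assms)
  then show ?thesis by simp
qed

lemma cont_scaleX:
  assumes "locally_convex_tvs TYPE('x::{topological_space, complex_vector})"
    and "continuous_on S f"
  shows "continuous_on S (\<lambda>y. w *\<^sub>C (f y :: 'x))"
proof -
  have sc: "continuous_on UNIV (\<lambda>(c::complex, x::'x). c *\<^sub>C x)"
    using assms by (simp add: locally_convex_tvs_def)
  have "continuous_on S (\<lambda>y. (\<lambda>(c::complex, x::'x). c *\<^sub>C x) (w, f y))"
    by (rule continuous_on_compose2[OF sc]) (auto intro: continuous_on_Pair assms continuous_on_const)
  then show ?thesis by simp
qed

lemma cont_sumX:
  assumes "locally_convex_tvs TYPE('x::{topological_space, complex_vector})"
    and "finite A" "\<And>j. j \<in> A \<Longrightarrow> continuous_on S (f j)"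
  shows "continuous_on S (\<lambda>y. \<Sum>j\<in>A. (f j y :: 'x))"
  using assms(2,3)
proof (induction A rule: finite_induct)
  case empty then show ?case by (simp add: continuous_on_const)
next
  case (insert x F)
  then show ?case by (simp add: cont_addX[OF assms(1)])
qed

lemma poly_at0:
  assumes "p \<in> Pn n S" "s \<in> S" "t \<in> S"
  obtains c where "\<And>m. p (s + nmul m t) = (\<Sum>k\<le>n. (of_nat m :: complex) ^ k *\<^sub>C c k)"
  using assms unfolding Pn_def by blast

lemma inj_part:
  assumes H: "closed_subgroup H" and tor: "quotient_torsion H"
  shows "inj_on (restr H) (Pn n UNIV :: ('g::{topological_space,ab_group_add} \<Rightarrow> 'x::{topological_space, complex_vector}) set)"
proof (rule inj_onI)
  fix p q :: "'g \<Rightarrow> 'x"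
  assume p: "p \<in> Pn n UNIV" and q: "q \<in> Pn n UNIV" and eq: "restr H p = restr H q"
  show "p = q"
  proof
    fix g
    obtain k where k: "k > 0" "nmul k g \<in> H" using tor unfolding quotient_torsion_def by blast
    define a where "a j = (of_nat (k * j) :: complex)" for j
    have inj: "inj_on a {..n}" using k(1) by (auto simp: inj_on_def a_def)
    have key: "r g = (\<Sum>j\<le>n. lw n a 1 j *\<^sub>C r (nmul (k * j) g))" if rP: "r \<in> Pn n UNIV" for r :: "'g \<Rightarrow> 'x"
    proof -
      obtain c where c: "\<And>m. r (0 + nmul m g) = (\<Sum>k\<le>n. (of_nat m :: complex) ^ k *\<^sub>C c k)"
        using poly_at0[OF rP, of 0 g] by blast
      have "r g = (\<Sum>i\<le>n. 1 ^ i *\<^sub>C c i)" using c[of 1] by simp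
      also have "\<dots> = (\<Sum>j\<le>n. lw n a 1 j *\<^sub>C (\<Sum>i\<le>n. a j ^ i *\<^sub>C c i))" by (rule interp[OF inj])
      also have "\<dots> = (\<Sum>j\<le>n. lw n a 1 j *\<^sub>C r (nmul (k * j) g))"
        using c unfolding a_def by simp
      finally show ?thesis .
    qed
    have "r (nmul (k * j) g) = restr H r (nmul (k * j) g)" for r :: "'g \<Rightarrow> 'x" and j
      using nmul_closed[OF H k(2), of j] by (simp add: restr_def nmul_mult mult.commute)
    then have "\<And>j. p (nmul (k * j) g) = q (nmul (k * j) g)" using eq by metis
    then show "p g = q g" using key[OF p] key[OF q] by simp
  qed
qed


lemma restr_in:
  assumes H: "closed_subgroup H" and P: "P \<in> Pn n (UNIV::'g::{topological_space,ab_group_add} set)" and "P = (P :: 'g \<Rightarrow> 'x::{topological_space, complex_vector})"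
  shows "restr H P \<in> Pn n H"
proof -
  have c: "continuous_on UNIV P" using P by (simp add: Pn_def)
  have "continuous_on H (restr H P)"
    using continuous_on_subset[OF c, of H] by (rule continuous_on_eq) (auto simp: restr_def)
  moreover have "\<forall>x. x \<notin> H \<longrightarrow> restr H P x = 0" by (simp add: restr_def)
  moreover have "\<exists>c::nat \<Rightarrow> 'x. \<forall>m::nat. restr H P (s + nmul m t) = (\<Sum>k\<le>n. (of_nat m) ^ k *\<^sub>C c k)"
    if "s \<in> H" "t \<in> H" for s t
  proof -
    obtain c where c: "\<And>m. P (s + nmul m t) = (\<Sum>k\<le>n. (of_nat m :: complex) ^ k *\<^sub>C c k)"
      using poly_at0[OF P, of s t] by blast
    have "s + nmul m t \<in> H" for m
      using H that nmul_closed[OF H that(2)] by (auto simp: closed_subgroup_def)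
    then show ?thesis using c by (auto simp: restr_def)
  qed
  ultimately show ?thesis unfolding Pn_def by blast
qed

lemma surj_part:
  assumes top: "topological_ab_group TYPE('g::{topological_space,ab_group_add})"
    and lc: "locally_convex_tvs TYPE('x::{topological_space, complex_vector})"
    and H: "closed_subgroup H" and bo: "quotient_bounded_order H"
    and p: "p \<in> (Pn n H :: ('g \<Rightarrow> 'x) set)"
  shows "\<exists>P\<in>Pn n UNIV. restr H P = p"
proof -
  obtain B where B: "\<forall>g. \<exists>k>0. k \<le> B \<and> nmul k g \<in> H"
    using bo unfolding quotient_bounded_order_def by blast
  define N :: nat where "N = fact B"
  have N0: "N > 0" by (simp add: N_def)
  have NH: "nmul N g \<in> H" for g
  proof -
    obtain k where k: "k > 0" "k \<le> B" "nmul k g \<in> H" using B by blast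
    have "k dvd N" unfolding N_def using k by (simp add: dvd_fact)
    then obtain r where "N = r * k" by (auto simp: dvd_def mult.commute)
    then show ?thesis using nmul_closed[OF H k(3), of r] by (simp add: nmul_mult)
  qed
  define a where "a j = (of_nat j :: complex)" for j
  have inj: "inj_on a {..n}" by (auto simp: inj_on_def a_def)
  define x where "x = 1 / (of_nat N :: complex)"
  define w where "w j = lw n a x j" for j
  define P where "P g = (\<Sum>j\<le>n. w j *\<^sub>C p (nmul (j * N) g))" for g
  have pc: "continuous_on H p" and p0: "\<And>y. y \<notin> H \<Longrightarrow> p y = 0" using p by (auto simp: Pn_def)
  have cont: "continuous_on UNIV P"
    unfolding P_def
  proof (intro cont_sumX[OF lc] cont_scaleX[OF lc] finite_atMost)
    fix j
    show "continuous_on UNIV (\<lambda>g. p (nmul (j * N) g))"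
      by (rule continuous_on_compose2[OF pc nmul_cont[OF top]])
        (auto simp: nmul_mult intro: nmul_closed[OF H NH])
  qed
  have polyP: "\<exists>c::nat \<Rightarrow> 'x. \<forall>m::nat. P (s + nmul m t) = (\<Sum>k\<le>n. (of_nat m) ^ k *\<^sub>C c k)" for s t
  proof -
    have "\<forall>j. \<exists>c. \<forall>m. p (nmul j (nmul N s) + nmul m (nmul N t)) = (\<Sum>k\<le>n. (of_nat m :: complex) ^ k *\<^sub>C c k)"
    proof
      fix j
      show "\<exists>c. \<forall>m. p (nmul j (nmul N s) + nmul m (nmul N t)) = (\<Sum>k\<le>n. (of_nat m :: complex) ^ k *\<^sub>C c k)"
        using poly_at0[OF p nmul_closed[OF H NH] NH, of j s t] by metis
    qed
    then obtain C where C: "\<And>j m. p (nmul j (nmul N s) + nmul m (nmul N t)) = (\<Sum>k\<le>n. (of_nat m :: complex) ^ k *\<^sub>C C j k)"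
      by metis
    have eqn: "nmul (j * N) (s + nmul m t) = nmul j (nmul N s) + nmul (j * m) (nmul N t)" for j m
      by (simp add: nmul_add_right nmul_mult[symmetric] mult.commute mult.left_commute)
    have "P (s + nmul m t) = (\<Sum>k\<le>n. (of_nat m) ^ k *\<^sub>C (\<Sum>j\<le>n. w j *\<^sub>C ((of_nat j :: complex) ^ k *\<^sub>C C j k)))" for m
    proof -
      have "P (s + nmul m t) = (\<Sum>j\<le>n. w j *\<^sub>C (\<Sum>k\<le>n. (of_nat (j * m) :: complex) ^ k *\<^sub>C C j k))"
        unfolding P_def eqn C ..
      also have "\<dots> = (\<Sum>j\<le>n. \<Sum>k\<le>n. (of_nat m :: complex) ^ k *\<^sub>C (w j *\<^sub>C ((of_nat j :: complex) ^ k *\<^sub>C C j k)))"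
        by (simp add: scaleC_sum_right scaleC_scaleC power_mult_distrib mult_ac)
      also have "\<dots> = (\<Sum>k\<le>n. \<Sum>j\<le>n. (of_nat m :: complex) ^ k *\<^sub>C (w j *\<^sub>C ((of_nat j :: complex) ^ k *\<^sub>C C j k)))"
        by (rule sum.swap)
      also have "\<dots> = (\<Sum>k\<le>n. (of_nat m) ^ k *\<^sub>C (\<Sum>j\<le>n. w j *\<^sub>C ((of_nat j :: complex) ^ k *\<^sub>C C j k)))"
        by (simp add: scaleC_sum_right)
      finally show ?thesis .
    qed
    then show ?thesis
      by (intro exI[of _ "\<lambda>k. \<Sum>j\<le>n. w j *\<^sub>C ((of_nat j :: complex) ^ k *\<^sub>C C j k)"]) blast
  qed
  have PP: "P \<in> Pn n UNIV" unfolding Pn_def using cont polyP by blast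
  have "restr H P = p"
  proof
    fix g
    show "restr H P g = p g"
    proof (cases "g \<in> H")
      case False then show ?thesis using p0 by (simp add: restr_def)
    next
      case True
      obtain c where c: "\<And>m. p (0 + nmul m g) = (\<Sum>k\<le>n. (of_nat m :: complex) ^ k *\<^sub>C c k)"
        using poly_at0[OF p _ True, of 0] H by (auto simp: closed_subgroup_def)
      define c' where "c' k = (of_nat N :: complex) ^ k *\<^sub>C c k" for k
      have "P g = (\<Sum>j\<le>n. w j *\<^sub>C (\<Sum>k\<le>n. a j ^ k *\<^sub>C c' k))"
        unfolding P_def c'_def a_def using c[of "_ * N"]
        by (simp add: scaleC_scaleC power_mult_distrib)
      also have "\<dots> = (\<Sum>k\<le>n. x ^ k *\<^sub>C c' k)"
        unfolding w_def by (rule interp[OF inj, symmetric])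
      also have "\<dots> = (\<Sum>k\<le>n. 1 ^ k *\<^sub>C c k)"
        unfolding c'_def x_def using N0 by (simp add: scaleC_scaleC power_mult_distrib[symmetric])
      also have "\<dots> = p g" using c[of 1] by simp
      finally show ?thesis using True by (simp add: restr_def)
    qed
  qed
  then show ?thesis using PP by blast
qed

theorem lemma3p3:
  fixes H :: "'g::{t2_space, ab_group_add} set" and n :: nat
  assumes "topological_ab_group TYPE('g)"
      and "locally_compact_space_type TYPE('g)"
      and "locally_convex_tvs TYPE('x::{topological_space, complex_vector})"
      and "closed_subgroup H"
      and "quotient_torsion H"
  shows "inj_on (restr H) (Pn n UNIV :: ('g \<Rightarrow> 'x) set)
       \<and> (quotient_bounded_order H \<and> fin_dim_C (Pn n H :: ('g \<Rightarrow> complex) set)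
           \<longrightarrow> bij_betw (restr H) (Pn n UNIV :: ('g \<Rightarrow> 'x) set) (Pn n H))"
proof (intro conjI impI)
  show inj: "inj_on (restr H) (Pn n UNIV :: ('g \<Rightarrow> 'x) set)"
    by (rule inj_part[OF assms(4,5)])
  assume bo: "quotient_bounded_order H \<and> fin_dim_C (Pn n H :: ('g \<Rightarrow> complex) set)"
  show "bij_betw (restr H) (Pn n UNIV :: ('g \<Rightarrow> 'x) set) (Pn n H)"
    unfolding bij_betw_def
  proof (intro conjI inj equalityI subsetI)
    fix y assume "y \<in> restr H ` (Pn n UNIV :: ('g \<Rightarrow> 'x) set)"
    then show "y \<in> Pn n H" using restr_in[OF assms(4)] by blast
  next
    fix y :: "'g \<Rightarrow> 'x" assume "y \<in> Pn n H"
    then show "y \<in> restr H ` Pn n UNIV"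
      using surj_part[OF assms(1,3,4)] bo by blast
  qed
qed

end
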